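(* Let $n,m,N$ be positive integers. Let $\mathcal{Q}_f\in\mathbb{R}^{n\times n}$ be symmetric positive definite and $\boldsymbol{b}\in\mathbb{R}^n$, and for each $i=1,\dots,N$ let $t_i>0$, let $\mathcal{R}_i\in\mathbb{R}^{m\times m}$ be symmetric positive definite, let $B_i\in\mathbb{R}^{n\times m}$ and $\boldsymbol{a}_i\in\mathbb{R}^m$. Set $T_0=0$ and $T_i=\sum_{j=1}^i t_j$. Let $P\colon[0,T_N]\to\mathbb{R}^{n\times n}$ and $q\colon[0,T_N]\to\mathbb{R}^n$ be the (continuous, piecewise smooth) solution of the piecewise Riccati ODE system $$\dot P(s) = -P(s)B_i\mathcal{R}_i^{-1}B_i^TP(s),\qquad \dot q(s) = -P(s)B_i\mathcal{R}_i^{-1}\big(B_i^Tq(s)-\boldsymbol{a}_i\big),\qquad s\in[T_{i-1},T_i),\ i=1,\dots,N,$$ with $P(0)=\mathcal{Q}_f$ and $q(0)=\boldsymbol{b}$, whose values at time $T_N$ are $$P(T_N)=\Big(\mathcal{Q}_f^{-1}+\sum_{i=1}^N t_iB_i\mathcal{R}_i^{-1}B_i^T\Big)^{-1},\qquad q(T_N)=P(T_N)\Big(\mathcal{Q}_f^{-1}\boldsymbol{b}+\sum_{i=1}^N t_iB_i\mathcal{R}_i^{-1}\boldsymbol{a}_i\Big).$$ Then the recursive least squares update is a discretization of this Riccati system: writing $P_i=P(T_i)$ and $q_i=q(T_i)$, for every $i=1,\dots,N$, $$P_i = P_{i-1} - t_iP_{i-1}B_i\big(\mathcal{R}_i + t_iB_i^TP_{i-1}B_i\big)^{-1}B_i^TP_{i-1},$$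 $$q_i = q_{i-1} + t_iP_iB_i\mathcal{R}_i^{-1}\boldsymbol{a}_i - t_iP_{i-1}B_i\big(\mathcal{R}_i + t_iB_i^TP_{i-1}B_i\big)^{-1}B_i^Tq_{i-1}.$$
   Context: The Riccati system arises from a regularized least-squares learning problem with $N$ data terms (weights $t_i$); $P(T_N)$ and $q(T_N)$ determine the learned minimizer, and the displayed recursion (obtained via the Woodbury identity) is the recursive least squares update for adding the $i$-th data term. *)

theory Defs
  imports "HOL-Analysis.Analysis"
begin

definition sym_posdef :: "real^'n^'n \<Rightarrow> bool" where
  "sym_posdef A \<longleftrightarrow> transpose A = A \<and> (\<forall>x. x \<noteq> 0 \<longrightarrow> x \<bullet> (A *v x) > 0)"

definition cumT :: "(nat \<Rightarrow> real) \<Rightarrow> nat \<Rightarrow> real" where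
  "cumT t i = (\<Sum>j=1..i. t j)"

end

theory Submission
  imports Defs
begin


lemma mm_add_r: "((A::real^'n^'m) + B) ** (C::real^'p^'n) = A ** C + B ** C"
  by (vector matrix_matrix_mult_def sum.distrib[symmetric] field_simps)
lemma mm_add_l: "(A::real^'n^'m) ** ((B::real^'p^'n) + C) = A ** B + A ** C"
  by (rule matrix_add_ldistrib)
lemma mm_diff_r: "((A::real^'n^'m) - B) ** (C::real^'p^'n) = A ** C - B ** C"
  by (vector matrix_matrix_mult_def sum_subtractf[symmetric] field_simps)
lemma mm_diff_l: "(A::real^'n^'m) ** ((B::real^'p^'n) - C) = A ** B - A ** C"
  by (vector matrix_matrix_mult_def sum_subtractf[symmetric] field_simps)
lemma mm_neg_r: "(- (A::real^'n^'m)) ** (C::real^'p^'n) = - (A ** C)"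
  by (vector matrix_matrix_mult_def sum_negf[symmetric])
lemma mm_neg_l: "(A::real^'n^'m) ** (- (C::real^'p^'n)) = - (A ** C)"
  by (vector matrix_matrix_mult_def sum_negf[symmetric])
lemma mm_scale_r: "(k *\<^sub>R (A::real^'n^'m)) ** (C::real^'p^'n) = k *\<^sub>R (A ** C)"
  by (simp add: matrix_matrix_mult_def sum_distrib_left mult_ac vec_eq_iff)
lemma mm_scale_l: "(A::real^'n^'m) ** (k *\<^sub>R (C::real^'p^'n)) = k *\<^sub>R (A ** C)"
  by (simp add: matrix_matrix_mult_def sum_distrib_left mult_ac vec_eq_iff)

lemma mv_add_m: "((A::real^'n^'m) + B) *v x = A *v x + B *v x"
  by (vector matrix_vector_mult_def sum.distrib[symmetric] field_simps)
lemma mv_add_v: "(A::real^'n^'m) *v (x + y) = A *v x + A *v y"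
  by (vector matrix_vector_mult_def sum.distrib[symmetric] field_simps)
lemma mv_diff_m: "((A::real^'n^'m) - B) *v x = A *v x - B *v x"
  by (vector matrix_vector_mult_def sum_subtractf[symmetric] field_simps)
lemma mv_diff_v: "(A::real^'n^'m) *v (x - y) = A *v x - A *v y"
  by (vector matrix_vector_mult_def sum_subtractf[symmetric] field_simps)
lemma mv_neg_m: "(- (A::real^'n^'m)) *v x = - (A *v x)"
  by (vector matrix_vector_mult_def sum_negf[symmetric])
lemma mv_scale_m: "(k *\<^sub>R (A::real^'n^'m)) *v x = k *\<^sub>R (A *v x)"
  by (simp add: matrix_vector_mult_def sum_distrib_left mult_ac vec_eq_iff)
lemma mv_scale_v: "(A::real^'n^'m) *v (k *\<^sub>R x) = k *\<^sub>R (A *v x)"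
  by (simp add: matrix_vector_mult_def sum_distrib_left mult_ac vec_eq_iff)

lemma bb_mm: "bounded_bilinear ((**) :: real^'n^'m \<Rightarrow> real^'p^'n \<Rightarrow> real^'p^'m)"
proof -
  have "bilinear ((**) :: real^'n^'m \<Rightarrow> real^'p^'n \<Rightarrow> real^'p^'m)"
    unfolding bilinear_def
    by (auto intro!: linearI simp: mm_add_r mm_add_l mm_scale_r mm_scale_l)
  then show ?thesis by (simp add: bilinear_conv_bounded_bilinear)
qed

lemma inv_unique: "(A::real^'n^'n) ** A' = mat 1 \<Longrightarrow> matrix_inv A = A'"
proof -
  assume h: "A ** A' = mat 1"
  then have h2: "A' ** A = mat 1" using matrix_left_right_inverse by blast
  let ?C = "matrix_inv A"
  have "A ** ?C = mat 1 \<and> ?C ** A = mat 1"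
    unfolding matrix_inv_def by (rule someI[of _ A']) (use h h2 in auto)
  then have "?C = ?C ** (A ** A')" using h by simp
  also have "\<dots> = A'" using \<open>A ** ?C = mat 1 \<and> ?C ** A = mat 1\<close> by (simp add: matrix_mul_assoc)
  finally show ?thesis .
qed

lemma inv_ker: assumes "\<forall>x. (A::real^'n^'n) *v x = 0 \<longrightarrow> x = 0"
  shows "A ** matrix_inv A = mat 1" "matrix_inv A ** A = mat 1"
proof -
  obtain B where "B ** A = mat 1" using assms matrix_left_invertible_ker by blast
  then have "A ** B = mat 1" using matrix_left_right_inverse by blast
  then show "A ** matrix_inv A = mat 1" "matrix_inv A ** A = mat 1"
    using inv_unique matrix_left_right_inverse by metis+
qed

lemma pd_ker: "(\<forall>x. x \<noteq> 0 \<longrightarrow> x \<bullet> ((A::real^'n^'n) *v x) > 0) \<Longrightarrow> \<forall>x. A *v x = 0 \<longrightarrow> x = 0"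
  by (metis inner_zero_right less_irrefl)

lemma psd_inv: assumes "(A::real^'n^'n) ** Ai = mat 1" "\<forall>x. x \<bullet> (A *v x) \<ge> 0"
  shows "y \<bullet> (Ai *v y) \<ge> 0"
proof -
  have "y = A *v (Ai *v y)" using assms(1) by (simp add: matrix_vector_mul_assoc)
  then have "y \<bullet> (Ai *v y) = (Ai *v y) \<bullet> (A *v (Ai *v y))" by (metis inner_commute)
  then show ?thesis using assms(2) by simp
qed

lemma quad_t: "x \<bullet> (((M::real^'m^'n) ** N ** transpose M) *v x) = (transpose M *v x) \<bullet> (N *v (transpose M *v x))"
proof -
  have "x \<bullet> (((M ** N) ** transpose M) *v x) = x \<bullet> (M *v (N *v (transpose M *v x)))"
    by (metis matrix_vector_mul_assoc)
  also have "\<dots> = (x v* M) \<bullet> (N *v (transpose M *v x))" by (simp add: dot_lmul_matrix)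
  finally show ?thesis by simp
qed



lemma ric:
  fixes P :: "real \<Rightarrow> real^'n^'n" and K H0 :: "real^'n^'n"
  assumes ab: "a < b" and Pc: "continuous_on {a..b} P"
    and Pd: "\<And>s. s \<in> {a<..<b} \<Longrightarrow> (P has_vector_derivative -(P s ** K ** P s)) (at s)"
    and Pa: "P a ** H0 = mat 1"
  shows "P b ** (H0 + (b-a) *\<^sub>R K) = mat 1"
proof -
  define X where "X s = H0 + (s-a) *\<^sub>R K" for s
  define W where "W s = mat 1 - P s ** X s" for s
  define D where "D s = - (P s ** K) ** W s" for s
  have Xd: "(X has_vector_derivative K) (at s)" for s
    unfolding X_def by (auto intro!: derivative_eq_intros)
  have dW: "(W has_vector_derivative D s) (at s)" if s: "s \<in> {a<..<b}" for s
  proof -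
    have "((\<lambda>s. P s ** X s) has_vector_derivative (P s ** K + (-(P s ** K ** P s)) ** X s)) (at s)"
      by (rule bounded_bilinear.has_vector_derivative[OF bb_mm Pd[OF s] Xd])
    then have "(W has_vector_derivative (0 - (P s ** K + (-(P s ** K ** P s)) ** X s))) (at s)"
      unfolding W_def by (rule has_vector_derivative_diff[OF has_vector_derivative_const])
    moreover have "0 - (P s ** K + (-(P s ** K ** P s)) ** X s) = D s"
      unfolding D_def W_def by (simp only: mm_diff_l mm_neg_r matrix_mul_assoc matrix_mul_rid) (simp add: algebra_simps)
    ultimately show ?thesis by simp
  qed
  have Xc: "continuous_on {a..b} X" unfolding X_def by (intro continuous_intros)
  have Wc: "continuous_on {a..b} W" unfolding W_def
    by (rule continuous_on_diff[OF continuous_on_const bounded_bilinear.continuous_on[OF bb_mm Pc Xc]])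
  have PKc: "continuous_on {a..b} (\<lambda>s. P s ** K)"
    by (rule bounded_bilinear.continuous_on[OF bb_mm Pc continuous_on_const])
  have "compact ((\<lambda>s. P s ** K) ` {a..b})"
    by (rule compact_continuous_image[OF PKc compact_Icc])
  then obtain M where M: "M > 0" "\<And>s. s \<in> {a..b} \<Longrightarrow> norm (P s ** K) \<le> M"
  proof -
    have "bounded ((\<lambda>s. P s ** K) ` {a..b})" using \<open>compact _\<close> by (rule compact_imp_bounded)
    then obtain M where "M > 0" "\<forall>x\<in>(\<lambda>s. P s ** K) ` {a..b}. norm x \<le> M" unfolding bounded_pos by blast
    then show ?thesis using that by auto
  qed
  obtain Kb where Kb: "Kb > 0" "\<And>x y. norm ((x::real^'n^'n) ** (y::real^'n^'n)) \<le> norm x * norm y * Kb"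
    using bounded_bilinear.pos_bounded[OF bb_mm] by blast
  define C where "C = M * Kb"
  have C0: "C > 0" using M Kb by (simp add: C_def)
  define f where "f s = W s \<bullet> W s" for s
  define g where "g s = exp (- 2 * C * s) * f s" for s
  define g' where "g' s = exp (- 2 * C * s) * (W s \<bullet> D s + D s \<bullet> W s) + (- 2 * C) * exp (- 2 * C * s) * f s" for s
  have gd: "(g has_derivative (\<lambda>h. h * g' s)) (at s)" if s: "s \<in> {a<..<b}" for s
  proof -
    have "(f has_vector_derivative (W s \<bullet> D s + D s \<bullet> W s)) (at s)"
      unfolding f_def using bounded_bilinear.has_vector_derivative[OF bounded_bilinear_inner dW[OF s] dW[OF s]]
      by simp
    then have fd: "(f has_real_derivative (W s \<bullet> D s + D s \<bullet> W s)) (at s)"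
      by (simp add: has_real_derivative_iff_has_vector_derivative)
    have e: "((\<lambda>s. exp (- 2 * C * s)) has_real_derivative (exp (- 2 * C * s) * (- 2 * C))) (at s)"
      by (auto intro!: derivative_eq_intros)
    have "(g has_real_derivative (exp (- 2 * C * s) * (W s \<bullet> D s + D s \<bullet> W s) + exp (- 2 * C * s) * (- 2 * C) * f s)) (at s)"
      unfolding g_def by (rule DERIV_mult'[OF e fd])
    then have "(g has_real_derivative g' s) (at s)"
      unfolding g'_def by (simp add: algebra_simps)
    then show ?thesis by (simp add: has_field_derivative_def mult_commute_abs)
  qed
  have g'le: "g' s \<le> 0" if s: "s \<in> {a<..<b}" for s
  proof -
    have h1: "W s \<bullet> D s \<le> norm (W s) * norm (D s)" by (rule norm_cauchy_schwarz)
    have "norm (D s) \<le> norm (- (P s ** K)) * norm (W s) * Kb" unfolding D_def by (rule Kb(2))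
    also have "\<dots> \<le> M * norm (W s) * Kb" using M(2)[of s] s Kb(1)
      by (intro mult_right_mono) auto
    finally have h2: "norm (D s) \<le> M * norm (W s) * Kb" .
    have "norm (W s) * norm (D s) \<le> norm (W s) * (M * norm (W s) * Kb)"
      using h2 by (rule mult_left_mono) simp
    also have "\<dots> = C * f s" unfolding C_def f_def by (simp add: power2_norm_eq_inner[symmetric] power2_eq_square)
    finally have "W s \<bullet> D s \<le> C * f s" using h1 by linarith
    then have "W s \<bullet> D s + D s \<bullet> W s - 2 * C * f s \<le> 0" by (simp add: inner_commute)
    then have "exp (- 2 * C * s) * (W s \<bullet> D s + D s \<bullet> W s - 2 * C * f s) \<le> 0"
      by (simp add: mult_nonneg_nonpos)
    then show ?thesis unfolding g'_def by (simp add: algebra_simps)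
  qed
  have gc: "continuous_on {a..b} g" unfolding g_def f_def
    by (intro continuous_intros Wc)
  obtain \<xi> where xi: "a < \<xi>" "\<xi> < b" "g b - g a = (b - a) * g' \<xi>"
    using mvt[OF ab gc gd] by auto
  have "W a = 0" unfolding W_def X_def using Pa by simp
  then have "g a = 0" by (simp add: g_def f_def)
  moreover have "g' \<xi> \<le> 0" using g'le xi by auto
  ultimately have "g b \<le> 0" using xi ab by (simp add: mult_nonneg_nonpos)
  moreover have "g b \<ge> 0" by (simp add: g_def f_def)
  ultimately have "f b = 0" by (simp add: g_def)
  then have "W b = 0" by (simp add: f_def)
  then show ?thesis by (simp add: W_def X_def)
qed



lemma bb_mv: "bounded_bilinear ((*v) :: real^'n^'m \<Rightarrow> real^'n \<Rightarrow> real^'m)"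
proof -
  have "bilinear ((*v) :: real^'n^'m \<Rightarrow> real^'n \<Rightarrow> real^'m)"
    unfolding bilinear_def
    by (auto intro!: linearI simp: mv_add_m mv_add_v mv_scale_m mv_scale_v)
  then show ?thesis by (simp add: bilinear_conv_bounded_bilinear)
qed

lemma qlin:
  fixes P :: "real \<Rightarrow> real^'n^'n" and q :: "real \<Rightarrow> real^'n" and K H0 :: "real^'n^'n" and c :: "real^'n"
  assumes ab: "a < b" and qc: "continuous_on {a..b} q"
    and PH: "\<And>s. s \<in> {a..b} \<Longrightarrow> P s ** (H0 + (s-a) *\<^sub>R K) = mat 1"
    and qd: "\<And>s. s \<in> {a<..<b} \<Longrightarrow> (q has_vector_derivative (-(P s ** K) *v q s + P s *v c)) (at s)"
  shows "(H0 + (b-a) *\<^sub>R K) *v q b = H0 *v q a + (b-a) *\<^sub>R c"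
proof -
  define X where "X s = H0 + (s-a) *\<^sub>R K" for s
  define y where "y s = X s *v q s - (s-a) *\<^sub>R c" for s
  have Xd: "(X has_vector_derivative K) (at s)" for s
    unfolding X_def by (auto intro!: derivative_eq_intros)
  have Xc: "continuous_on {a..b} X" unfolding X_def by (intro continuous_intros)
  have yc: "continuous_on {a..b} y" unfolding y_def
    by (rule continuous_on_diff[OF bounded_bilinear.continuous_on[OF bb_mv Xc qc]]) (intro continuous_intros)
  have yd: "(y has_derivative (\<lambda>h. 0)) (at s within {a..b})" if s: "s \<in> {a..b} - {a,b}" for s
  proof -
    have s': "s \<in> {a<..<b}" using s by auto
    have XP: "X s ** P s = mat 1" using PH[of s] s' matrix_left_right_inverse unfolding X_def by auto
    have "((\<lambda>s. X s *v q s) has_vector_derivative (X s *v (-(P s ** K) *v q s + P s *v c) + K *v q s)) (at s)"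
      by (rule bounded_bilinear.has_vector_derivative[OF bb_mv Xd qd[OF s']])
    moreover have "X s *v (-(P s ** K) *v q s + P s *v c) + K *v q s = c"
    proof -
      have "X s *v (-(P s ** K) *v q s + P s *v c) = - ((X s ** P s ** K) *v q s) + (X s ** P s) *v c"
        by (simp add: mv_add_v mv_diff_v mv_neg_m matrix_vector_mul_assoc matrix_mul_assoc)
      then show ?thesis using XP by simp
    qed
    ultimately have "((\<lambda>s. X s *v q s) has_vector_derivative c) (at s)" by simp
    then have "(y has_vector_derivative (c - 1 *\<^sub>R c)) (at s)" unfolding y_def
      by (intro derivative_eq_intros) auto
    then have "(y has_derivative (\<lambda>h. 0)) (at s)" by (simp add: has_vector_derivative_def)
    then show ?thesis by (rule has_derivative_at_withinI)
  qed
  have "y b = y a"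
    by (rule has_derivative_zero_unique_strong_interval[of "{a,b}" a b y "y a" b]) (use ab yc yd in auto)
  then show ?thesis by (simp add: y_def X_def algebra_simps)
qed

lemma woodbury:
  fixes Hm A :: "real^'n^'n" and B :: "real^'m^'n" and R Ri S Si :: "real^'m^'m"
  assumes HA: "Hm ** A = mat 1" and RiR: "Ri ** R = mat 1" and SSi: "S ** Si = mat 1"
    and Sdef: "S = R + t *\<^sub>R (transpose B ** A ** B)"
  shows "(Hm + t *\<^sub>R (B ** Ri ** transpose B)) ** (A - t *\<^sub>R (A ** B ** Si ** transpose B ** A)) = mat 1"
proof -
  define K where "K = B ** Ri ** transpose B"
  define G where "G = B ** Si ** transpose B ** A"
  have AG: "A ** B ** Si ** transpose B ** A = A ** G" unfolding G_def by (simp add: matrix_mul_assoc)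
  have e1: "B ** Ri ** S ** Si = B ** Ri" by (metis matrix_mul_assoc matrix_mul_rid SSi)
  have e2: "B ** Ri ** R = B" by (metis matrix_mul_assoc matrix_mul_rid RiR)
  have kag: "t *\<^sub>R (K ** A ** G) = K ** A - G"
  proof -
    have "t *\<^sub>R (K ** A ** G) = B ** Ri ** (t *\<^sub>R (transpose B ** A ** B)) ** Si ** transpose B ** A"
      by (simp add: K_def G_def matrix_mul_assoc mm_scale_l mm_scale_r)
    also have "\<dots> = B ** Ri ** (S - R) ** Si ** transpose B ** A" using Sdef by simp
    also have "\<dots> = B ** Ri ** S ** Si ** transpose B ** A - B ** Ri ** R ** Si ** transpose B ** A"
      by (simp add: mm_diff_l mm_diff_r)
    also have "\<dots> = K ** A - G" unfolding e1 e2 K_def G_def by (simp add: matrix_mul_assoc)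
    finally show ?thesis .
  qed
  have "(Hm + t *\<^sub>R K) ** (A - t *\<^sub>R (A ** G)) = Hm ** A - t *\<^sub>R (Hm ** A ** G) + t *\<^sub>R (K ** A) - t *\<^sub>R (t *\<^sub>R (K ** A ** G))"
    by (simp add: mm_add_r mm_diff_l mm_scale_l mm_scale_r matrix_mul_assoc algebra_simps)
  also have "\<dots> = mat 1" unfolding kag HA by (simp add: algebra_simps)
  finally show ?thesis unfolding AG K_def .
qed



theorem mainTheorem1:
  fixes N :: nat
    and Qf :: "real^'n^'n" and b :: "real^'n"
    and t :: "nat \<Rightarrow> real"
    and R :: "nat \<Rightarrow> real^'m^'m"
    and B :: "nat \<Rightarrow> real^'m^'n"
    and a :: "nat \<Rightarrow> real^'m"
    and P :: "real \<Rightarrow> real^'n^'n"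
    and q :: "real \<Rightarrow> real^'n"
  assumes N_pos: "N \<ge> 1"
    and Qf_spd: "sym_posdef Qf"
    and t_pos: "\<And>i. i \<in> {1..N} \<Longrightarrow> t i > 0"
    and R_spd: "\<And>i. i \<in> {1..N} \<Longrightarrow> sym_posdef (R i)"
    and P_cont: "continuous_on {0..cumT t N} P"
    and q_cont: "continuous_on {0..cumT t N} q"
    and P_ode: "\<And>i s. i \<in> {1..N} \<Longrightarrow> s \<in> {cumT t (i-1)..<cumT t i} \<Longrightarrow>
       (P has_vector_derivative
          (- (P s ** B i ** matrix_inv (R i) ** transpose (B i) ** P s)))
       (at s within {cumT t (i-1)..<cumT t i})"
    and q_ode: "\<And>i s. i \<in> {1..N} \<Longrightarrow> s \<in> {cumT t (i-1)..<cumT t i} \<Longrightarrow>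
       (q has_vector_derivative
          (- ((P s ** B i ** matrix_inv (R i)) *v (transpose (B i) *v q s - a i))))
       (at s within {cumT t (i-1)..<cumT t i})"
    and P_init: "P 0 = Qf"
    and q_init: "q 0 = b"
    and P_final: "P (cumT t N) =
       matrix_inv (matrix_inv Qf + (\<Sum>i=1..N. t i *\<^sub>R (B i ** matrix_inv (R i) ** transpose (B i))))"
    and q_final: "q (cumT t N) =
       P (cumT t N) *v (matrix_inv Qf *v b + (\<Sum>i=1..N. t i *\<^sub>R ((B i ** matrix_inv (R i)) *v a i)))"
  shows "\<forall>i\<in>{1..N}.
     P (cumT t i) = P (cumT t (i-1))
        - t i *\<^sub>R (P (cumT t (i-1)) ** B i
            ** matrix_inv (R i + t i *\<^sub>R (transpose (B i) ** P (cumT t (i-1)) ** B i))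
            ** transpose (B i) ** P (cumT t (i-1)))
   \<and> q (cumT t i) = q (cumT t (i-1))
        + t i *\<^sub>R ((P (cumT t i) ** B i ** matrix_inv (R i)) *v a i)
        - t i *\<^sub>R ((P (cumT t (i-1)) ** B i
            ** matrix_inv (R i + t i *\<^sub>R (transpose (B i) ** P (cumT t (i-1)) ** B i))
            ** transpose (B i)) *v q (cumT t (i-1)))"
proof -
  define T where "T = cumT t"
  have T0: "T 0 = 0" by (simp add: T_def cumT_def)
  have TS: "T (Suc j) = T j + t (Suc j)" for j by (simp add: T_def cumT_def)
  have Tge: "0 \<le> T j" if "j \<le> N" for j
    unfolding T_def cumT_def using that t_pos by (intro sum_nonneg) (auto intro: less_imp_le)
  have Tle: "T j \<le> T N" if "j \<le> N" for j
    unfolding T_def cumT_def using that t_pos by (intro sum_mono2) (auto intro: less_imp_le)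
  define Kj where "Kj j = B j ** matrix_inv (R j) ** transpose (B j)" for j
  define H where "H i = matrix_inv Qf + (\<Sum>j=1..i. t j *\<^sub>R Kj j)" for i
  have HS: "H (Suc j) = H j + t (Suc j) *\<^sub>R Kj (Suc j)" for j by (simp add: H_def)
  have Qpd: "\<forall>x. x \<noteq> 0 \<longrightarrow> x \<bullet> (Qf *v x) > 0" using Qf_spd by (simp add: sym_posdef_def)
  have Rpd: "\<forall>x. x \<noteq> 0 \<longrightarrow> x \<bullet> (R i *v x) > 0" if "i \<in> {1..N}" for i
    using R_spd[OF that] by (simp add: sym_posdef_def)
  have Rinv: "R i ** matrix_inv (R i) = mat 1" "matrix_inv (R i) ** R i = mat 1" if "i \<in> {1..N}" for i
    using inv_ker[OF pd_ker[OF Rpd[OF that]]] by auto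
  have Rpsd: "0 \<le> x \<bullet> (R i *v x)" if "i \<in> {1..N}" for i x
    using Rpd[OF that, rule_format, of x] by (cases "x = 0") auto
  have Kpsd: "0 \<le> y \<bullet> (Kj i *v y)" if "i \<in> {1..N}" for i y
    unfolding Kj_def quad_t using psd_inv[OF Rinv(1)[OF that]] Rpsd[OF that] by blast
  have Pall: "P s ** (H j + (s - T j) *\<^sub>R Kj (Suc j)) = mat 1"
    if j: "Suc j \<le> N" and IH: "P (T j) ** H j = mat 1" and s: "s \<in> {T j..T (Suc j)}" for j s
  proof (cases "s = T j")
    case True then show ?thesis using IH by simp
  next
    case False
    then have as: "T j < s" using s by auto
    have sub: "{T j..s} \<subseteq> {0..cumT t N}" using Tge[of j] Tle[of "Suc j"] s j by (auto simp: T_def)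
    have i1: "Suc j \<in> {1..N}" using j by auto
    show ?thesis
    proof (rule ric[OF as continuous_on_subset[OF P_cont sub] _ IH])
      fix u assume u: "u \<in> {T j<..<s}"
      have u': "u \<in> {cumT t (Suc j - 1)..<cumT t (Suc j)}" using u s by (auto simp: T_def)
      have "(P has_vector_derivative (- (P u ** B (Suc j) ** matrix_inv (R (Suc j)) ** transpose (B (Suc j)) ** P u)))
         (at u within {T j<..<T (Suc j)})"
        by (rule has_vector_derivative_within_subset[OF P_ode[OF i1 u']]) (auto simp: T_def)
      then have "(P has_vector_derivative (- (P u ** B (Suc j) ** matrix_inv (R (Suc j)) ** transpose (B (Suc j)) ** P u))) (at u)"
        using has_vector_derivative_within_open[of u "{T j<..<T (Suc j)}"] u s by auto
      then show "(P has_vector_derivative - (P u ** Kj (Suc j) ** P u)) (at u)"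
        by (simp add: Kj_def matrix_mul_assoc)
    qed
  qed
  have Inv: "j \<le> N \<longrightarrow> P (T j) ** H j = mat 1 \<and> (\<forall>y. 0 \<le> y \<bullet> (H j *v y))" for j
  proof (induction j)
    case 0
    have "Qf ** matrix_inv Qf = mat 1" using inv_ker[OF pd_ker[OF Qpd]] by auto
    moreover have "0 \<le> y \<bullet> (matrix_inv Qf *v y)" for y
      using psd_inv[OF \<open>Qf ** matrix_inv Qf = mat 1\<close>] Qpd by (metis inner_zero_left order_less_imp_le order_refl)
    ultimately show ?case by (simp add: T0 P_init H_def)
  next
    case (Suc j)
    show ?case
    proof
      assume j: "Suc j \<le> N"
      then have IH: "P (T j) ** H j = mat 1" "\<And>y. 0 \<le> y \<bullet> (H j *v y)" using Suc by auto
      have "P (T (Suc j)) ** (H j + (T (Suc j) - T j) *\<^sub>R Kj (Suc j)) = mat 1"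
        using Pall[OF j IH(1), of "T (Suc j)"] t_pos[of "Suc j"] j by (simp add: TS)
      then have 1: "P (T (Suc j)) ** H (Suc j) = mat 1" by (simp add: TS HS)
      have "0 \<le> y \<bullet> (H (Suc j) *v y)" for y
      proof -
        have "y \<bullet> (H (Suc j) *v y) = y \<bullet> (H j *v y) + t (Suc j) * (y \<bullet> (Kj (Suc j) *v y))"
          by (simp add: HS mv_add_m mv_scale_m inner_add_right)
        then show ?thesis using IH(2)[of y] Kpsd[of "Suc j" y] t_pos[of "Suc j"] j by simp
      qed
      then show "P (T (Suc j)) ** H (Suc j) = mat 1 \<and> (\<forall>y. 0 \<le> y \<bullet> (H (Suc j) *v y))" using 1 by auto
    qed
  qed
  show ?thesis
  proof
    fix i assume i: "i \<in> {1..N}"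
    then obtain j where ij: "i = Suc j" by (cases i) auto
    have j: "Suc j \<le> N" using i ij by auto
    have i1: "Suc j \<in> {1..N}" using j by auto
    define A where "A = P (T j)"
    define Bi where "Bi = B (Suc j)"
    define Ri where "Ri = matrix_inv (R (Suc j))"
    define ti where "ti = t (Suc j)"
    define S where "S = R (Suc j) + ti *\<^sub>R (transpose Bi ** A ** Bi)"
    define Si where "Si = matrix_inv S"
    define Pn where "Pn = P (T (Suc j))"
    have ti0: "ti > 0" using t_pos[OF i1] by (simp add: ti_def)
    have AH: "A ** H j = mat 1" "\<And>y. 0 \<le> y \<bullet> (H j *v y)" using Inv[of j] j by (auto simp: A_def)
    have HA: "H j ** A = mat 1" using AH(1) matrix_left_right_inverse by blast
    have PnH: "Pn ** H (Suc j) = mat 1" using Inv[of "Suc j"] j by (auto simp: Pn_def)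
    have Apsd: "0 \<le> y \<bullet> (A *v y)" for y using psd_inv[OF HA] AH(2) by blast
    have Sker: "\<forall>x. S *v x = 0 \<longrightarrow> x = 0"
    proof (intro allI impI)
      fix x assume Sx: "S *v x = 0"
      have "x \<bullet> (S *v x) = x \<bullet> (R (Suc j) *v x) + ti * ((Bi *v x) \<bullet> (A *v (Bi *v x)))"
        using quad_t[of x "transpose Bi" A] unfolding S_def by (simp add: mv_add_m mv_scale_m inner_add_right)
      then have "x \<bullet> (R (Suc j) *v x) \<le> 0" using Sx Apsd[of "Bi *v x"] ti0
        by (smt (verit) inner_zero_right mult_nonneg_nonneg)
      then show "x = 0" using Rpd[OF i1] by (meson not_le)
    qed
    have SSi: "S ** Si = mat 1" using inv_ker[OF Sker] by (simp add: Si_def)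
    have RiR: "Ri ** R (Suc j) = mat 1" using Rinv(2)[OF i1] by (simp add: Ri_def)
    have W: "(H j + ti *\<^sub>R (Bi ** Ri ** transpose Bi)) ** (A - ti *\<^sub>R (A ** Bi ** Si ** transpose Bi ** A)) = mat 1"
      by (rule woodbury[OF HA RiR SSi S_def])
    have HSj: "H (Suc j) = H j + ti *\<^sub>R (Bi ** Ri ** transpose Bi)"
      by (simp add: HS ti_def Kj_def Bi_def Ri_def)
    have Pform: "Pn = A - ti *\<^sub>R (A ** Bi ** Si ** transpose Bi ** A)"
    proof -
      have "H (Suc j) ** Pn = mat 1" using PnH matrix_left_right_inverse by blast
      then have "matrix_inv (H (Suc j)) = Pn" by (rule inv_unique)
      moreover have "matrix_inv (H (Suc j)) = A - ti *\<^sub>R (A ** Bi ** Si ** transpose Bi ** A)"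
        using W HSj by (simp add: inv_unique)
      ultimately show ?thesis by simp
    qed
    have qpart: "q (T (Suc j)) = q (T j) + ti *\<^sub>R ((Pn ** Bi ** Ri) *v a (Suc j)) - ti *\<^sub>R ((A ** Bi ** Si ** transpose Bi) *v q (T j))"
    proof -
      define c where "c = (Bi ** Ri) *v a (Suc j)"
      have ab: "T j < T (Suc j)" using ti0 by (simp add: TS ti_def)
      have sub: "{T j..T (Suc j)} \<subseteq> {0..cumT t N}" using Tge[of j] Tle[of "Suc j"] j by (auto simp: T_def)
      have ql: "(H j + (T (Suc j) - T j) *\<^sub>R Kj (Suc j)) *v q (T (Suc j)) = H j *v q (T j) + (T (Suc j) - T j) *\<^sub>R c"
      proof (rule qlin[OF ab continuous_on_subset[OF q_cont sub]])
        fix s assume "s \<in> {T j..T (Suc j)}"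
        then show "P s ** (H j + (s - T j) *\<^sub>R Kj (Suc j)) = mat 1" using Pall[OF j AH(1)[unfolded A_def]] by blast
      next
        fix u assume u: "u \<in> {T j<..<T (Suc j)}"
        have u': "u \<in> {cumT t (Suc j - 1)..<cumT t (Suc j)}" using u by (auto simp: T_def)
        have "(q has_vector_derivative (- ((P u ** B (Suc j) ** matrix_inv (R (Suc j))) *v (transpose (B (Suc j)) *v q u - a (Suc j)))))
           (at u within {T j<..<T (Suc j)})"
          by (rule has_vector_derivative_within_subset[OF q_ode[OF i1 u']]) (auto simp: T_def)
        then have "(q has_vector_derivative (- ((P u ** B (Suc j) ** matrix_inv (R (Suc j))) *v (transpose (B (Suc j)) *v q u - a (Suc j))))) (at u)"
          using has_vector_derivative_within_open[of u "{T j<..<T (Suc j)}"] u by auto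
        moreover have "- ((P u ** B (Suc j) ** matrix_inv (R (Suc j))) *v (transpose (B (Suc j)) *v q u - a (Suc j)))
            = - (P u ** Kj (Suc j)) *v q u + P u *v c"
          by (simp add: c_def Kj_def Bi_def Ri_def mv_diff_v mv_neg_m matrix_vector_mul_assoc matrix_mul_assoc del: transpose_matrix_vector)
        ultimately show "(q has_vector_derivative - (P u ** Kj (Suc j)) *v q u + P u *v c) (at u)" by simp
      qed
      then have ql2: "H (Suc j) *v q (T (Suc j)) = H j *v q (T j) + ti *\<^sub>R c"
        by (simp add: TS HS ti_def)
      have e1: "q (T (Suc j)) = Pn *v (H (Suc j) *v q (T (Suc j)))" using PnH by (simp add: matrix_vector_mul_assoc)
      have e2: "Pn *v (H (Suc j) *v q (T (Suc j))) = Pn *v (H j *v q (T j)) + ti *\<^sub>R (Pn *v c)"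
        using ql2 by (simp add: mv_add_v mv_scale_v)
      have e3: "A ** Bi ** Si ** transpose Bi ** A ** H j = A ** Bi ** Si ** transpose Bi"
        using AH(1) by (metis matrix_mul_assoc matrix_mul_rid)
      have e4: "Pn *v (H j *v q (T j)) = (A ** H j) *v q (T j) - ti *\<^sub>R ((A ** Bi ** Si ** transpose Bi ** A ** H j) *v q (T j))"
        unfolding Pform by (simp add: mm_diff_r mm_scale_r mv_diff_m mv_scale_m matrix_vector_mul_assoc)
      have e5: "Pn *v c = (Pn ** Bi ** Ri) *v a (Suc j)" by (simp add: c_def matrix_vector_mul_assoc matrix_mul_assoc)
      show ?thesis using e1 e2 e4 e5 unfolding e3 AH(1) by (simp add: algebra_simps)
    qed
    have goal: "Pn = A - ti *\<^sub>R (A ** Bi ** matrix_inv (R (Suc j) + ti *\<^sub>R (transpose Bi ** A ** Bi)) ** transpose Bi ** A)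
      \<and> q (T (Suc j)) = q (T j) + ti *\<^sub>R ((Pn ** Bi ** Ri) *v a (Suc j))
         - ti *\<^sub>R ((A ** Bi ** matrix_inv (R (Suc j) + ti *\<^sub>R (transpose Bi ** A ** Bi)) ** transpose Bi) *v q (T j))"
      using Pform qpart by (simp add: Si_def S_def)
    then show "P (cumT t i) = P (cumT t (i-1))
        - t i *\<^sub>R (P (cumT t (i-1)) ** B i
            ** matrix_inv (R i + t i *\<^sub>R (transpose (B i) ** P (cumT t (i-1)) ** B i))
            ** transpose (B i) ** P (cumT t (i-1)))
   \<and> q (cumT t i) = q (cumT t (i-1))
        + t i *\<^sub>R ((P (cumT t i) ** B i ** matrix_inv (R i)) *v a i)
        - t i *\<^sub>R ((P (cumT t (i-1)) ** B i
            ** matrix_inv (R i + t i *\<^sub>R (transpose (B i) ** P (cumT t (i-1)) ** B i))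
            ** transpose (B i)) *v q (cumT t (i-1)))"
      unfolding ij by (simp add: A_def Bi_def Ri_def ti_def Pn_def T_def)
  qed
qed

end
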